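(* Let $A$ and $B$ be integral domains, and assume that the ring $A \times B$ has more than one unit. Then the factroids of $A \times B$ are precisely the subgroups of the form $F \times G$, where $F$ is a factroid of $A$ and $G$ is a factroid of $B$.
   Context: For a ring $R$, $\mathrm{reg}(R)$ is the set of (left) nonzerodivisors of $R$. A factroid of $R$ is an additive subgroup $F$ of $R$ such that for all $a\in R$ and $b\in\mathrm{reg}(R)$, $ba\in F$ implies $a\in F$. *)

theory Defs
  imports "HOL-Algebra.Algebra"
begin

definition reg :: "('a, 'm) ring_scheme \<Rightarrow> 'a set" where
  "reg R = {b \<in> carrier R. \<forall>a \<in> carrier R. b \<otimes>\<^bsub>R\<^esub> a = \<zero>\<^bsub>R\<^esub> \<longrightarrow> a = \<zero>\<^bsub>R\<^esub>}"

definition factroid :: "('a, 'm) ring_scheme \<Rightarrow> 'a set \<Rightarrow> bool" where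
  "factroid R F \<longleftrightarrow> subgroup F (add_monoid R) \<and>
     (\<forall>a \<in> carrier R. \<forall>b \<in> reg R. b \<otimes>\<^bsub>R\<^esub> a \<in> F \<longrightarrow> a \<in> F)"

end

theory Submission
  imports Defs
begin

declare RDirProd_carrier [simp]

lemma RDP_mult [simp]: "(a, b) \<otimes>\<^bsub>RDirProd R S\<^esub> (c, d) = (a \<otimes>\<^bsub>R\<^esub> c, b \<otimes>\<^bsub>S\<^esub> d)"
  by (simp add: RDirProd_def DirProd_def monoid.defs)
lemma RDP_add [simp]: "(a, b) \<oplus>\<^bsub>RDirProd R S\<^esub> (c, d) = (a \<oplus>\<^bsub>R\<^esub> c, b \<oplus>\<^bsub>S\<^esub> d)"
  by (simp add: RDirProd_def DirProd_def monoid.defs)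
lemma RDP_zero [simp]: "\<zero>\<^bsub>RDirProd R S\<^esub> = (\<zero>\<^bsub>R\<^esub>, \<zero>\<^bsub>S\<^esub>)"
  by (simp add: RDirProd_def DirProd_def monoid.defs)
lemma RDP_one [simp]: "\<one>\<^bsub>RDirProd R S\<^esub> = (\<one>\<^bsub>R\<^esub>, \<one>\<^bsub>S\<^esub>)"
  by (simp add: RDirProd_def DirProd_def monoid.defs)
lemma RDP_ainv [simp]:
  assumes "ring R" "ring S" "a \<in> carrier R" "b \<in> carrier S"
  shows "\<ominus>\<^bsub>RDirProd R S\<^esub> (a, b) = (\<ominus>\<^bsub>R\<^esub> a, \<ominus>\<^bsub>S\<^esub> b)"
proof -
  have "group (add_monoid R)" "group (add_monoid S)"
    using assms(1,2) by (simp_all add: abelian_group.a_group ring.is_abelian_group)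
  then show ?thesis using assms unfolding a_inv_def RDirProd_add_monoid by (intro inv_DirProd) (simp_all add: assms)
qed

lemma subgroup_add_iff:
  assumes "ring R"
  shows "subgroup F (add_monoid R) \<longleftrightarrow> F \<subseteq> carrier R \<and> \<zero>\<^bsub>R\<^esub> \<in> F \<and>
     (\<forall>x\<in>F. \<forall>y\<in>F. x \<oplus>\<^bsub>R\<^esub> y \<in> F) \<and> (\<forall>x\<in>F. \<ominus>\<^bsub>R\<^esub> x \<in> F)"
proof
  assume "subgroup F (add_monoid R)"
  then interpret subgroup F "add_monoid R" .
  have "F \<subseteq> carrier R" using subset by simp
  moreover have "\<zero>\<^bsub>R\<^esub> \<in> F" using one_closed by simp
  moreover have "\<forall>x\<in>F. \<forall>y\<in>F. x \<oplus>\<^bsub>R\<^esub> y \<in> F" using m_closed by simp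
  moreover have "\<forall>x\<in>F. \<ominus>\<^bsub>R\<^esub> x \<in> F" using m_inv_closed unfolding a_inv_def by simp
  ultimately show "F \<subseteq> carrier R \<and> \<zero>\<^bsub>R\<^esub> \<in> F \<and>
     (\<forall>x\<in>F. \<forall>y\<in>F. x \<oplus>\<^bsub>R\<^esub> y \<in> F) \<and> (\<forall>x\<in>F. \<ominus>\<^bsub>R\<^esub> x \<in> F)" by blast
next
  assume h: "F \<subseteq> carrier R \<and> \<zero>\<^bsub>R\<^esub> \<in> F \<and>
     (\<forall>x\<in>F. \<forall>y\<in>F. x \<oplus>\<^bsub>R\<^esub> y \<in> F) \<and> (\<forall>x\<in>F. \<ominus>\<^bsub>R\<^esub> x \<in> F)"
  show "subgroup F (add_monoid R)"
  proof (rule subgroup.intro)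
    show "F \<subseteq> carrier (add_monoid R)" using h by simp
    show "\<one>\<^bsub>add_monoid R\<^esub> \<in> F" using h by simp
    fix x y assume "x \<in> F" "y \<in> F"
    then show "x \<otimes>\<^bsub>add_monoid R\<^esub> y \<in> F" using h by simp
  next
    fix x assume "x \<in> F"
    then show "inv\<^bsub>add_monoid R\<^esub> x \<in> F" using h unfolding a_inv_def by simp
  qed
qed

lemma regD:
  assumes "b \<in> reg R"
  shows "b \<in> carrier R" "\<And>a. a \<in> carrier R \<Longrightarrow> b \<otimes>\<^bsub>R\<^esub> a = \<zero>\<^bsub>R\<^esub> \<Longrightarrow> a = \<zero>\<^bsub>R\<^esub>"
  using assms unfolding reg_def by blast+

lemma regI:
  assumes "b \<in> carrier R" "\<And>a. a \<in> carrier R \<Longrightarrow> b \<otimes>\<^bsub>R\<^esub> a = \<zero>\<^bsub>R\<^esub> \<Longrightarrow> a = \<zero>\<^bsub>R\<^esub>"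
  shows "b \<in> reg R"
  using assms unfolding reg_def by blast

lemma reg_RDP:
  assumes "ring R" "ring S"
  shows "(x, y) \<in> reg (RDirProd R S) \<longleftrightarrow> x \<in> reg R \<and> y \<in> reg S"
proof -
  interpret R: ring R by fact
  interpret S: ring S by fact
  show ?thesis
  proof
    assume h: "(x, y) \<in> reg (RDirProd R S)"
    have c: "x \<in> carrier R" "y \<in> carrier S" using regD(1)[OF h] by simp_all
    have "x \<in> reg R"
    proof (rule regI[OF c(1)])
      fix a assume a: "a \<in> carrier R" "x \<otimes>\<^bsub>R\<^esub> a = \<zero>\<^bsub>R\<^esub>"
      have "(a, \<zero>\<^bsub>S\<^esub>) = \<zero>\<^bsub>RDirProd R S\<^esub>"
        by (rule regD(2)[OF h]) (simp_all add: a c)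
      then show "a = \<zero>\<^bsub>R\<^esub>" by simp
    qed
    moreover have "y \<in> reg S"
    proof (rule regI[OF c(2)])
      fix a assume a: "a \<in> carrier S" "y \<otimes>\<^bsub>S\<^esub> a = \<zero>\<^bsub>S\<^esub>"
      have "(\<zero>\<^bsub>R\<^esub>, a) = \<zero>\<^bsub>RDirProd R S\<^esub>"
        by (rule regD(2)[OF h]) (simp_all add: a c)
      then show "a = \<zero>\<^bsub>S\<^esub>" by simp
    qed
    ultimately show "x \<in> reg R \<and> y \<in> reg S" by blast
  next
    assume h: "x \<in> reg R \<and> y \<in> reg S"
    then have hx: "x \<in> reg R" and hy: "y \<in> reg S" by blast+
    show "(x, y) \<in> reg (RDirProd R S)"
    proof (rule regI)
      show "(x, y) \<in> carrier (RDirProd R S)" using regD(1)[OF hx] regD(1)[OF hy] by simp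
      fix p assume p: "p \<in> carrier (RDirProd R S)" "(x, y) \<otimes>\<^bsub>RDirProd R S\<^esub> p = \<zero>\<^bsub>RDirProd R S\<^esub>"
      obtain a b where ab: "p = (a, b)" by (cases p)
      have a: "a \<in> carrier R" "b \<in> carrier S" using p(1) unfolding ab by simp_all
      have e: "x \<otimes>\<^bsub>R\<^esub> a = \<zero>\<^bsub>R\<^esub>" "y \<otimes>\<^bsub>S\<^esub> b = \<zero>\<^bsub>S\<^esub>" using p(2) unfolding ab by simp_all
      show "p = \<zero>\<^bsub>RDirProd R S\<^esub>" unfolding ab using regD(2)[OF hx a(1) e(1)] regD(2)[OF hy a(2) e(2)] by simp
    qed
  qed
qed

lemma reg_domain:
  assumes "domain R"
  shows "reg R = carrier R - {\<zero>\<^bsub>R\<^esub>}"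
proof -
  interpret R: domain R by fact
  show ?thesis
  proof (intro equalityI subsetI)
    fix b assume b: "b \<in> reg R"
    have "b \<noteq> \<zero>\<^bsub>R\<^esub>"
    proof
      assume "b = \<zero>\<^bsub>R\<^esub>"
      then have "\<one>\<^bsub>R\<^esub> = \<zero>\<^bsub>R\<^esub>" using regD(2)[OF b R.one_closed] by simp
      then show False using R.one_not_zero by simp
    qed
    then show "b \<in> carrier R - {\<zero>\<^bsub>R\<^esub>}" using regD(1)[OF b] by simp
  next
    fix b assume b: "b \<in> carrier R - {\<zero>\<^bsub>R\<^esub>}"
    show "b \<in> reg R"
      by (rule regI) (use b R.integral in auto)
  qed
qed

lemma factroidD:
  assumes "factroid R F" "a \<in> carrier R" "b \<in> reg R" "b \<otimes>\<^bsub>R\<^esub> a \<in> F"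
  shows "a \<in> F"
  using assms unfolding factroid_def by blast

lemma reg_RDP_dom:
  assumes "domain A" "domain B"
  shows "(x, y) \<in> reg (RDirProd A B) \<longleftrightarrow>
     x \<in> carrier A \<and> x \<noteq> \<zero>\<^bsub>A\<^esub> \<and> y \<in> carrier B \<and> y \<noteq> \<zero>\<^bsub>B\<^esub>"
  using reg_RDP[OF domain.axioms(1)[THEN cring.axioms(1), OF assms(1)]
                   domain.axioms(1)[THEN cring.axioms(1), OF assms(2)]]
        reg_domain[OF assms(1)] reg_domain[OF assms(2)] by blast

lemma unit_nonzero:
  assumes "domain A" "u \<in> Units A"
  shows "u \<noteq> \<zero>\<^bsub>A\<^esub>"
proof
  interpret A: domain A by fact
  assume "u = \<zero>\<^bsub>A\<^esub>"
  then have "\<one>\<^bsub>A\<^esub> = \<zero>\<^bsub>A\<^esub>"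
    using A.Units_l_inv[OF assms(2)] A.Units_inv_closed[OF assms(2)] by simp
  then show False using A.one_not_zero by simp
qed

lemma split_left:
  assumes dA: "domain A" and dB: "domain B" and fH: "factroid (RDirProd A B) H"
    and u: "u \<in> Units A" and v: "v \<in> Units A" and uv: "u \<noteq> v"
    and ab: "(a, b) \<in> H"
  shows "(a, \<zero>\<^bsub>B\<^esub>) \<in> H"
proof -
  interpret A: domain A by fact
  interpret B: domain B by fact
  have rA: "ring A" and rB: "ring B" by (rule A.ring_axioms, rule B.ring_axioms)
  have sg: "subgroup H (add_monoid (RDirProd A B))" using fH unfolding factroid_def by blast
  have sH: "H \<subseteq> carrier A \<times> carrier B"
    and addH: "\<forall>x\<in>H. \<forall>y\<in>H. x \<oplus>\<^bsub>RDirProd A B\<^esub> y \<in> H"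
    and negH: "\<forall>x\<in>H. \<ominus>\<^bsub>RDirProd A B\<^esub> x \<in> H"
    using sg unfolding subgroup_add_iff[OF RDirProd_ring[OF rA rB]] by auto
  have a: "a \<in> carrier A" and b: "b \<in> carrier B" using ab sH by auto
  have mult: "(w \<otimes>\<^bsub>A\<^esub> a, b) \<in> H" if w: "w \<in> Units A" for w
  proof (rule factroidD[OF fH])
    show "(w \<otimes>\<^bsub>A\<^esub> a, b) \<in> carrier (RDirProd A B)" using w a b by auto
    have "inv\<^bsub>A\<^esub> w \<in> Units A" using w by simp
    then have "inv\<^bsub>A\<^esub> w \<noteq> \<zero>\<^bsub>A\<^esub>" by (rule unit_nonzero[OF dA])
    then show "(inv\<^bsub>A\<^esub> w, \<one>\<^bsub>B\<^esub>) \<in> reg (RDirProd A B)"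
      unfolding reg_RDP_dom[OF dA dB] using w by simp
    have "(inv\<^bsub>A\<^esub> w, \<one>\<^bsub>B\<^esub>) \<otimes>\<^bsub>RDirProd A B\<^esub> (w \<otimes>\<^bsub>A\<^esub> a, b) = (a, b)"
      using w a b A.Units_closed[OF w] A.Units_inv_closed[OF w] by (simp add: A.m_assoc[symmetric])
    then show "(inv\<^bsub>A\<^esub> w, \<one>\<^bsub>B\<^esub>) \<otimes>\<^bsub>RDirProd A B\<^esub> (w \<otimes>\<^bsub>A\<^esub> a, b) \<in> H"
      using ab by simp
  qed
  have uc: "u \<in> carrier A" and vc: "v \<in> carrier A" using u v by auto
  have "(u \<otimes>\<^bsub>A\<^esub> a, b) \<oplus>\<^bsub>RDirProd A B\<^esub> \<ominus>\<^bsub>RDirProd A B\<^esub> (v \<otimes>\<^bsub>A\<^esub> a, b) \<in> H"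
    using addH negH mult[OF u] mult[OF v] by blast
  moreover have "(u \<otimes>\<^bsub>A\<^esub> a, b) \<oplus>\<^bsub>RDirProd A B\<^esub> \<ominus>\<^bsub>RDirProd A B\<^esub> (v \<otimes>\<^bsub>A\<^esub> a, b)
      = ((u \<oplus>\<^bsub>A\<^esub> \<ominus>\<^bsub>A\<^esub> v) \<otimes>\<^bsub>A\<^esub> a, \<zero>\<^bsub>B\<^esub>)"
    using uc vc a b by (simp add: RDP_ainv[OF rA rB] A.l_distr A.l_minus B.r_neg)
  ultimately have d: "(u \<oplus>\<^bsub>A\<^esub> \<ominus>\<^bsub>A\<^esub> v, \<one>\<^bsub>B\<^esub>) \<otimes>\<^bsub>RDirProd A B\<^esub> (a, \<zero>\<^bsub>B\<^esub>) \<in> H"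
    using a by simp
  have nz: "u \<oplus>\<^bsub>A\<^esub> \<ominus>\<^bsub>A\<^esub> v \<noteq> \<zero>\<^bsub>A\<^esub>"
  proof
    assume "u \<oplus>\<^bsub>A\<^esub> \<ominus>\<^bsub>A\<^esub> v = \<zero>\<^bsub>A\<^esub>"
    then have "\<ominus>\<^bsub>A\<^esub> (\<ominus>\<^bsub>A\<^esub> v) = u" using uc vc by (intro A.minus_equality) simp_all
    then show False using uv vc by simp
  qed
  show ?thesis
  proof (rule factroidD[OF fH _ _ d])
    show "(a, \<zero>\<^bsub>B\<^esub>) \<in> carrier (RDirProd A B)" using a by simp
    show "(u \<oplus>\<^bsub>A\<^esub> \<ominus>\<^bsub>A\<^esub> v, \<one>\<^bsub>B\<^esub>) \<in> reg (RDirProd A B)"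
      unfolding reg_RDP_dom[OF dA dB] using nz uc vc by simp
  qed
qed

lemma split_right:
  assumes dA: "domain A" and dB: "domain B" and fH: "factroid (RDirProd A B) H"
    and u: "u \<in> Units B" and v: "v \<in> Units B" and uv: "u \<noteq> v"
    and ab: "(a, b) \<in> H"
  shows "(\<zero>\<^bsub>A\<^esub>, b) \<in> H"
proof -
  interpret A: domain A by fact
  interpret B: domain B by fact
  have rA: "ring A" and rB: "ring B" by (rule A.ring_axioms, rule B.ring_axioms)
  have sg: "subgroup H (add_monoid (RDirProd A B))" using fH unfolding factroid_def by blast
  have sH: "H \<subseteq> carrier A \<times> carrier B"
    and addH: "\<forall>x\<in>H. \<forall>y\<in>H. x \<oplus>\<^bsub>RDirProd A B\<^esub> y \<in> H"
    and negH: "\<forall>x\<in>H. \<ominus>\<^bsub>RDirProd A B\<^esub> x \<in> H"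
    using sg unfolding subgroup_add_iff[OF RDirProd_ring[OF rA rB]] by auto
  have a: "a \<in> carrier A" and b: "b \<in> carrier B" using ab sH by auto
  have mult: "(a, w \<otimes>\<^bsub>B\<^esub> b) \<in> H" if w: "w \<in> Units B" for w
  proof (rule factroidD[OF fH])
    show "(a, w \<otimes>\<^bsub>B\<^esub> b) \<in> carrier (RDirProd A B)" using w a b by auto
    have "inv\<^bsub>B\<^esub> w \<in> Units B" using w by simp
    then have "inv\<^bsub>B\<^esub> w \<noteq> \<zero>\<^bsub>B\<^esub>" by (rule unit_nonzero[OF dB])
    then show "(\<one>\<^bsub>A\<^esub>, inv\<^bsub>B\<^esub> w) \<in> reg (RDirProd A B)"
      unfolding reg_RDP_dom[OF dA dB] using w by simp
    have "(\<one>\<^bsub>A\<^esub>, inv\<^bsub>B\<^esub> w) \<otimes>\<^bsub>RDirProd A B\<^esub> (a, w \<otimes>\<^bsub>B\<^esub> b) = (a, b)"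
      using w a b B.Units_closed[OF w] B.Units_inv_closed[OF w] by (simp add: B.m_assoc[symmetric])
    then show "(\<one>\<^bsub>A\<^esub>, inv\<^bsub>B\<^esub> w) \<otimes>\<^bsub>RDirProd A B\<^esub> (a, w \<otimes>\<^bsub>B\<^esub> b) \<in> H"
      using ab by simp
  qed
  have uc: "u \<in> carrier B" and vc: "v \<in> carrier B" using u v by auto
  have "(a, u \<otimes>\<^bsub>B\<^esub> b) \<oplus>\<^bsub>RDirProd A B\<^esub> \<ominus>\<^bsub>RDirProd A B\<^esub> (a, v \<otimes>\<^bsub>B\<^esub> b) \<in> H"
    using addH negH mult[OF u] mult[OF v] by blast
  moreover have "(a, u \<otimes>\<^bsub>B\<^esub> b) \<oplus>\<^bsub>RDirProd A B\<^esub> \<ominus>\<^bsub>RDirProd A B\<^esub> (a, v \<otimes>\<^bsub>B\<^esub> b)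
      = (\<zero>\<^bsub>A\<^esub>, (u \<oplus>\<^bsub>B\<^esub> \<ominus>\<^bsub>B\<^esub> v) \<otimes>\<^bsub>B\<^esub> b)"
    using uc vc a b by (simp add: RDP_ainv[OF rA rB] B.l_distr B.l_minus A.r_neg)
  ultimately have d: "(\<one>\<^bsub>A\<^esub>, u \<oplus>\<^bsub>B\<^esub> \<ominus>\<^bsub>B\<^esub> v) \<otimes>\<^bsub>RDirProd A B\<^esub> (\<zero>\<^bsub>A\<^esub>, b) \<in> H"
    using b by simp
  have nz: "u \<oplus>\<^bsub>B\<^esub> \<ominus>\<^bsub>B\<^esub> v \<noteq> \<zero>\<^bsub>B\<^esub>"
  proof
    assume "u \<oplus>\<^bsub>B\<^esub> \<ominus>\<^bsub>B\<^esub> v = \<zero>\<^bsub>B\<^esub>"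
    then have "\<ominus>\<^bsub>B\<^esub> (\<ominus>\<^bsub>B\<^esub> v) = u" using uc vc by (intro B.minus_equality) simp_all
    then show False using uv vc by simp
  qed
  show ?thesis
  proof (rule factroidD[OF fH _ _ d])
    show "(\<zero>\<^bsub>A\<^esub>, b) \<in> carrier (RDirProd A B)" using b by simp
    show "(\<one>\<^bsub>A\<^esub>, u \<oplus>\<^bsub>B\<^esub> \<ominus>\<^bsub>B\<^esub> v) \<in> reg (RDirProd A B)"
      unfolding reg_RDP_dom[OF dA dB] using nz uc vc by simp
  qed
qed

lemma units_RDP:
  assumes "(x, y) \<in> Units (RDirProd A B)"
  shows "x \<in> Units A" "y \<in> Units B"
proof -
  obtain w where w: "w \<in> carrier (RDirProd A B)"
    "w \<otimes>\<^bsub>RDirProd A B\<^esub> (x, y) = \<one>\<^bsub>RDirProd A B\<^esub>"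
    "(x, y) \<otimes>\<^bsub>RDirProd A B\<^esub> w = \<one>\<^bsub>RDirProd A B\<^esub>"
    and c: "(x, y) \<in> carrier (RDirProd A B)"
    using assms unfolding Units_def by blast
  obtain w1 w2 where ww: "w = (w1, w2)" by (cases w)
  show "x \<in> Units A" using w c unfolding ww Units_def by auto
  show "y \<in> Units B" using w c unfolding ww Units_def by auto
qed

theorem theorem4p19:
  fixes A :: "('a, 'm) ring_scheme" and B :: "('b, 'n) ring_scheme"
  assumes "domain A" and "domain B"
    and "\<exists>u \<in> Units (RDirProd A B). \<exists>v \<in> Units (RDirProd A B). u \<noteq> v"
  shows "factroid (RDirProd A B) H \<longleftrightarrow>
           (\<exists>F G. factroid A F \<and> factroid B G \<and> H = F \<times> G)"
proof -
  interpret A: domain A by fact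
  interpret B: domain B by fact
  have dA: "domain A" and dB: "domain B" by fact+
  have rA: "ring A" and rB: "ring B" by (rule A.ring_axioms, rule B.ring_axioms)
  have rP: "ring (RDirProd A B)" by (rule RDirProd_ring[OF rA rB])
  show ?thesis
  proof
    assume fH: "factroid (RDirProd A B) H"
    have sg: "subgroup H (add_monoid (RDirProd A B))" using fH unfolding factroid_def by blast
    have sH: "H \<subseteq> carrier A \<times> carrier B"
      and zH: "(\<zero>\<^bsub>A\<^esub>, \<zero>\<^bsub>B\<^esub>) \<in> H"
      and addH: "\<forall>x\<in>H. \<forall>y\<in>H. x \<oplus>\<^bsub>RDirProd A B\<^esub> y \<in> H"
      and negH: "\<forall>x\<in>H. \<ominus>\<^bsub>RDirProd A B\<^esub> x \<in> H"
      using sg unfolding subgroup_add_iff[OF rP] by auto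
    obtain u v where u: "u \<in> Units (RDirProd A B)" and v: "v \<in> Units (RDirProd A B)"
      and uv: "u \<noteq> v" using assms(3) by blast
    obtain u1 u2 where uu: "u = (u1, u2)" by (cases u)
    obtain v1 v2 where vv: "v = (v1, v2)" by (cases v)
    have U: "u1 \<in> Units A" "u2 \<in> Units B" "v1 \<in> Units A" "v2 \<in> Units B"
      using units_RDP[of u1 u2 A B] units_RDP[of v1 v2 A B] u v unfolding uu vv by simp_all
    have key: "(a, \<zero>\<^bsub>B\<^esub>) \<in> H \<and> (\<zero>\<^bsub>A\<^esub>, b) \<in> H" if ab: "(a, b) \<in> H" for a b
    proof -
      have a: "a \<in> carrier A" and b: "b \<in> carrier B" using ab sH by auto
      have eq: "(a, b) \<oplus>\<^bsub>RDirProd A B\<^esub> \<ominus>\<^bsub>RDirProd A B\<^esub> (a, \<zero>\<^bsub>B\<^esub>) = (\<zero>\<^bsub>A\<^esub>, b)"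
        using a b by (simp add: RDP_ainv[OF rA rB] A.r_neg)
      have eq2: "(a, b) \<oplus>\<^bsub>RDirProd A B\<^esub> \<ominus>\<^bsub>RDirProd A B\<^esub> (\<zero>\<^bsub>A\<^esub>, b) = (a, \<zero>\<^bsub>B\<^esub>)"
        using a b by (simp add: RDP_ainv[OF rA rB] B.r_neg)
      show ?thesis
      proof (cases "u1 = v1")
        case False
        have 1: "(a, \<zero>\<^bsub>B\<^esub>) \<in> H" by (rule split_left[OF dA dB fH U(1) U(3) False ab])
        then have "(\<zero>\<^bsub>A\<^esub>, b) \<in> H" using addH negH ab eq by metis
        with 1 show ?thesis by blast
      next
        case True
        then have ne: "u2 \<noteq> v2" using uv unfolding uu vv by blast
        have 1: "(\<zero>\<^bsub>A\<^esub>, b) \<in> H" by (rule split_right[OF dA dB fH U(2) U(4) ne ab])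
        then have "(a, \<zero>\<^bsub>B\<^esub>) \<in> H" using addH negH ab eq2 by metis
        with 1 show ?thesis by blast
      qed
    qed
    define F where "F = {a. (a, \<zero>\<^bsub>B\<^esub>) \<in> H}"
    define G where "G = {b. (\<zero>\<^bsub>A\<^esub>, b) \<in> H}"
    have HFG: "H = F \<times> G"
    proof (intro equalityI subsetI)
      fix p assume "p \<in> H"
      then show "p \<in> F \<times> G" using key unfolding F_def G_def by (cases p) auto
    next
      fix p assume p: "p \<in> F \<times> G"
      obtain a b where ab: "p = (a, b)" by (cases p)
      have 1: "(a, \<zero>\<^bsub>B\<^esub>) \<in> H" and 2: "(\<zero>\<^bsub>A\<^esub>, b) \<in> H"
        using p unfolding ab F_def G_def by auto
      have a: "a \<in> carrier A" and b: "b \<in> carrier B" using 1 2 sH by auto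
      have "(a, \<zero>\<^bsub>B\<^esub>) \<oplus>\<^bsub>RDirProd A B\<^esub> (\<zero>\<^bsub>A\<^esub>, b) = (a, b)" using a b by simp
      then show "p \<in> H" unfolding ab using addH 1 2 by metis
    qed
    have fF: "factroid A F" unfolding factroid_def
    proof
      show "subgroup F (add_monoid A)" unfolding subgroup_add_iff[OF rA]
      proof (intro conjI ballI)
        show "F \<subseteq> carrier A" using sH unfolding F_def by auto
        show "\<zero>\<^bsub>A\<^esub> \<in> F" using zH unfolding F_def by simp
        fix x assume x: "x \<in> F"
        then have xc: "x \<in> carrier A" using sH unfolding F_def by auto
        have "\<ominus>\<^bsub>RDirProd A B\<^esub> (x, \<zero>\<^bsub>B\<^esub>) = (\<ominus>\<^bsub>A\<^esub> x, \<zero>\<^bsub>B\<^esub>)"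
          using xc by (simp add: RDP_ainv[OF rA rB])
        then show "\<ominus>\<^bsub>A\<^esub> x \<in> F" using negH x unfolding F_def by (metis mem_Collect_eq)
        fix y assume y: "y \<in> F"
        have "(x, \<zero>\<^bsub>B\<^esub>) \<oplus>\<^bsub>RDirProd A B\<^esub> (y, \<zero>\<^bsub>B\<^esub>) = (x \<oplus>\<^bsub>A\<^esub> y, \<zero>\<^bsub>B\<^esub>)" by simp
        then show "x \<oplus>\<^bsub>A\<^esub> y \<in> F" using addH x y unfolding F_def by (metis mem_Collect_eq)
      qed
      show "\<forall>a\<in>carrier A. \<forall>b\<in>reg A. b \<otimes>\<^bsub>A\<^esub> a \<in> F \<longrightarrow> a \<in> F"
      proof (intro ballI impI)
        fix a b assume a: "a \<in> carrier A" and b: "b \<in> reg A" and ba: "b \<otimes>\<^bsub>A\<^esub> a \<in> F"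
        have bc: "b \<in> carrier A" "b \<noteq> \<zero>\<^bsub>A\<^esub>" using b reg_domain[OF dA] by auto
        have "(a, \<zero>\<^bsub>B\<^esub>) \<in> H"
        proof (rule factroidD[OF fH])
          show "(a, \<zero>\<^bsub>B\<^esub>) \<in> carrier (RDirProd A B)" using a by simp
          show "(b, \<one>\<^bsub>B\<^esub>) \<in> reg (RDirProd A B)" unfolding reg_RDP_dom[OF dA dB] using bc by simp
          show "(b, \<one>\<^bsub>B\<^esub>) \<otimes>\<^bsub>RDirProd A B\<^esub> (a, \<zero>\<^bsub>B\<^esub>) \<in> H" using ba unfolding F_def by simp
        qed
        then show "a \<in> F" unfolding F_def by simp
      qed
    qed
    have fG: "factroid B G" unfolding factroid_def
    proof
      show "subgroup G (add_monoid B)" unfolding subgroup_add_iff[OF rB]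
      proof (intro conjI ballI)
        show "G \<subseteq> carrier B" using sH unfolding G_def by auto
        show "\<zero>\<^bsub>B\<^esub> \<in> G" using zH unfolding G_def by simp
        fix x assume x: "x \<in> G"
        then have xc: "x \<in> carrier B" using sH unfolding G_def by auto
        have "\<ominus>\<^bsub>RDirProd A B\<^esub> (\<zero>\<^bsub>A\<^esub>, x) = (\<zero>\<^bsub>A\<^esub>, \<ominus>\<^bsub>B\<^esub> x)"
          using xc by (simp add: RDP_ainv[OF rA rB])
        then show "\<ominus>\<^bsub>B\<^esub> x \<in> G" using negH x unfolding G_def by (metis mem_Collect_eq)
        fix y assume y: "y \<in> G"
        have "(\<zero>\<^bsub>A\<^esub>, x) \<oplus>\<^bsub>RDirProd A B\<^esub> (\<zero>\<^bsub>A\<^esub>, y) = (\<zero>\<^bsub>A\<^esub>, x \<oplus>\<^bsub>B\<^esub> y)" by simp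
        then show "x \<oplus>\<^bsub>B\<^esub> y \<in> G" using addH x y unfolding G_def by (metis mem_Collect_eq)
      qed
      show "\<forall>a\<in>carrier B. \<forall>b\<in>reg B. b \<otimes>\<^bsub>B\<^esub> a \<in> G \<longrightarrow> a \<in> G"
      proof (intro ballI impI)
        fix a b assume a: "a \<in> carrier B" and b: "b \<in> reg B" and ba: "b \<otimes>\<^bsub>B\<^esub> a \<in> G"
        have bc: "b \<in> carrier B" "b \<noteq> \<zero>\<^bsub>B\<^esub>" using b reg_domain[OF dB] by auto
        have "(\<zero>\<^bsub>A\<^esub>, a) \<in> H"
        proof (rule factroidD[OF fH])
          show "(\<zero>\<^bsub>A\<^esub>, a) \<in> carrier (RDirProd A B)" using a by simp
          show "(\<one>\<^bsub>A\<^esub>, b) \<in> reg (RDirProd A B)" unfolding reg_RDP_dom[OF dA dB] using bc by simp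
          show "(\<one>\<^bsub>A\<^esub>, b) \<otimes>\<^bsub>RDirProd A B\<^esub> (\<zero>\<^bsub>A\<^esub>, a) \<in> H" using ba unfolding G_def by simp
        qed
        then show "a \<in> G" unfolding G_def by simp
      qed
    qed
    show "\<exists>F G. factroid A F \<and> factroid B G \<and> H = F \<times> G" using fF fG HFG by blast
  next
    assume "\<exists>F G. factroid A F \<and> factroid B G \<and> H = F \<times> G"
    then obtain F G where fF: "factroid A F" and fG: "factroid B G" and HFG: "H = F \<times> G" by blast
    have sF: "F \<subseteq> carrier A \<and> \<zero>\<^bsub>A\<^esub> \<in> F \<and>
     (\<forall>x\<in>F. \<forall>y\<in>F. x \<oplus>\<^bsub>A\<^esub> y \<in> F) \<and> (\<forall>x\<in>F. \<ominus>\<^bsub>A\<^esub> x \<in> F)"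
      using fF unfolding factroid_def subgroup_add_iff[OF rA] by blast
    have sG: "G \<subseteq> carrier B \<and> \<zero>\<^bsub>B\<^esub> \<in> G \<and>
     (\<forall>x\<in>G. \<forall>y\<in>G. x \<oplus>\<^bsub>B\<^esub> y \<in> G) \<and> (\<forall>x\<in>G. \<ominus>\<^bsub>B\<^esub> x \<in> G)"
      using fG unfolding factroid_def subgroup_add_iff[OF rB] by blast
    show "factroid (RDirProd A B) H" unfolding factroid_def
    proof
      show "subgroup H (add_monoid (RDirProd A B))" unfolding subgroup_add_iff[OF rP]
      proof (intro conjI ballI)
        show "H \<subseteq> carrier (RDirProd A B)" using sF sG unfolding HFG by auto
        show "\<zero>\<^bsub>RDirProd A B\<^esub> \<in> H" using sF sG unfolding HFG by simp
        fix p assume p: "p \<in> H"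
        obtain a b where ab: "p = (a, b)" by (cases p)
        have a: "a \<in> F" "a \<in> carrier A" and b: "b \<in> G" "b \<in> carrier B"
          using p sF sG unfolding ab HFG by auto
        show "\<ominus>\<^bsub>RDirProd A B\<^esub> p \<in> H" unfolding ab HFG
          using a b sF sG by (simp add: RDP_ainv[OF rA rB])
        fix q assume q: "q \<in> H"
        obtain c d where cd: "q = (c, d)" by (cases q)
        have c: "c \<in> F" and d: "d \<in> G" using q unfolding cd HFG by auto
        show "p \<oplus>\<^bsub>RDirProd A B\<^esub> q \<in> H" unfolding ab cd HFG
          using a b c d sF sG by simp
      qed
      show "\<forall>p\<in>carrier (RDirProd A B). \<forall>q\<in>reg (RDirProd A B). q \<otimes>\<^bsub>RDirProd A B\<^esub> p \<in> H \<longrightarrow> p \<in> H"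
      proof (intro ballI impI)
        fix p q assume p: "p \<in> carrier (RDirProd A B)" and q: "q \<in> reg (RDirProd A B)"
          and qp: "q \<otimes>\<^bsub>RDirProd A B\<^esub> p \<in> H"
        obtain a b where ab: "p = (a, b)" by (cases p)
        obtain c d where cd: "q = (c, d)" by (cases q)
        have a: "a \<in> carrier A" "b \<in> carrier B" using p unfolding ab by auto
        have c: "c \<in> reg A" "d \<in> reg B" using q unfolding cd reg_RDP[OF rA rB] by auto
        have e: "c \<otimes>\<^bsub>A\<^esub> a \<in> F" "d \<otimes>\<^bsub>B\<^esub> b \<in> G" using qp unfolding ab cd HFG by auto
        have "a \<in> F" by (rule factroidD[OF fF a(1) c(1) e(1)])
        moreover have "b \<in> G" by (rule factroidD[OF fG a(2) c(2) e(2)])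
        ultimately show "p \<in> H" unfolding ab HFG by simp
      qed
    qed
  qed
qed

end
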